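(* Let $U=\{1,2,\dots,N\}$ be a finite population of unit labels and let $\underline{\theta}=(y_1,\dots,y_N)\in\mathbb{R}^N$ be the unknown population parameter vector, where $y_i$ is the response of unit $i$. Let $\delta_1,\dots,\delta_T$ be finitely many candidate sampling designs, and for each $k$ let $\hat\phi_{k,1},\dots,\hat\phi_{k,V_k}$ be finitely many candidate estimators accompanying $\delta_k$; the pair (design $\delta_k$, estimator $\hat\phi_{k,j}$) is called the strategy $\Lambda_{k,j}$. A strategy $\Lambda_{k,j}$ is first selected at random with probability $P(\Lambda_{k,j})$, and then an ordered sample $\underline{s}$ of unit labels (in order of selection, repeats allowed) is drawn with design $\delta_k$. Assume: (i) the probabilities $P(\Lambda_{k,j})$ do not depend on $\underline{\theta}$; (ii) every candidate design is of the conventional and/or adaptive type, i.e. for every ordered sample $\underline{s}$ and every strategy $\Lambda_{k,j}$, $P(\underline{s}\mid \underline{\theta},\Lambda_{k,j})=P(\underline{s}\mid \underline{y}_{\underline{s}},\delta_k)$, where $\underline{y}_{\underline{s}}$ is the vector of responses of the units in $\underline{s}$ (so the selection probability depends on $\underline{\theta}$ only through the responses of the sampled units; for a conventional design it does not depend on $\underline{\theta}$ at all). The observed data is $D_0=d_0=(\Lambda_{k,j},((i,y_i): i\in\underline{s}))$, so that $P_{\underline{\theta}}(D_0=d_0)=P(\Lambda_{k,j})\,P(\underline{s}\mid \underline{y}_{\underline{s}},\delta_k)\,I[\underline{\theta}\text{ is consistent with } d_0]$. Let $D_R=r_d(D_0)=\{(i,y_i): i\in s\}$ be the reduced data, where $s$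 is the unordered set of distinct labels appearing in $\underline{s}$. Then $D_R$ is a minimal sufficient statistic for $\underline{\theta}$.
   Context: A parameter vector $\underline{\theta}=(y_1,\dots,y_N)$ is consistent with data $d_R=\{(i,y_i'): i\in s\}$ (or with $d_0$) if for every sampled label $i$ the recorded response equals the $i$-th component of $\underline{\theta}$; $\Theta_{d_R}$ denotes the set of such $\underline{\theta}$. The strategy selected is recorded as part of the observed data $d_0$. Minimal sufficiency is in the usual sense for the family of distributions of $D_0$ indexed by $\underline{\theta}\in\mathbb{R}^N$. *)

theory Defs
  imports "HOL-Probability.Probability"
begin

text \<open>A statistic T of a discrete family of distributions P indexed by a parameter
  set Theta is sufficient if the conditional distribution of the data given T does
  not depend on the parameter, i.e. there is h with
  P_theta(D = d) = h d * P_theta(T(D) = T d) for all parameters and data points.\<close>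
definition sufficient_stat ::
  "'p set \<Rightarrow> ('p \<Rightarrow> 'd pmf) \<Rightarrow> ('d \<Rightarrow> 'b) \<Rightarrow> bool" where
  "sufficient_stat Theta P T \<longleftrightarrow>
     (\<exists>h. \<forall>th\<in>Theta. \<forall>d.
        pmf (P th) d = h d * measure_pmf.prob (P th) {x. T x = T d})"

definition family_support :: "'p set \<Rightarrow> ('p \<Rightarrow> 'd pmf) \<Rightarrow> 'd set" where
  "family_support Theta P = (\<Union>th\<in>Theta. set_pmf (P th))"

text \<open>A statistic is determined up to
  equivalence by the partition it induces, so it suffices to let S range over
  statistics with values in 'd set (e.g. its level sets).\<close>
definition minimal_sufficient_stat ::
  "'p set \<Rightarrow> ('p \<Rightarrow> 'd pmf) \<Rightarrow> ('d \<Rightarrow> 'b) \<Rightarrow> bool" where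
  "minimal_sufficient_stat Theta P T \<longleftrightarrow>
     sufficient_stat Theta P T \<and>
     (\<forall>S :: 'd \<Rightarrow> 'd set. sufficient_stat Theta P S \<longrightarrow>
        (\<forall>d\<in>family_support Theta P. \<forall>d'\<in>family_support Theta P.
            S d = S d' \<longrightarrow> T d = T d'))"

text \<open>Parameter vectors theta = (y_1,...,y_N), represented as functions on labels
  that vanish outside {1..N}.\<close>
definition param_space :: "nat \<Rightarrow> (nat \<Rightarrow> real) set" where
  "param_space N = {th. \<forall>i. i \<notin> {1..N} \<longrightarrow> th i = 0}"

definition consistent :: "(nat \<Rightarrow> real) \<Rightarrow> (nat \<times> real) list \<Rightarrow> bool" where
  "consistent th xs \<longleftrightarrow> (\<forall>(i, y)\<in>set xs. th i = y)"

definition reduced_data :: "('st \<times> (nat \<times> real) list) \<Rightarrow> (nat \<times> real) set" where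
  "reduced_data d0 = set (snd d0)"

end

theory Submission
  imports Defs
begin

lemma prob_cong_pmf:
  assumes "\<And>x. x \<in> A \<Longrightarrow> pmf p x = pmf p' x"
  shows "measure_pmf.prob p A = measure_pmf.prob p' A"
  using assms by (simp add: measure_pmf_conv_infsetsum cong: infsetsum_cong)

lemma pmf_le_prob:
  assumes "x \<in> A"
  shows "pmf p x \<le> measure_pmf.prob p A"
proof -
  have "pmf p x = measure_pmf.prob p {x}" by (simp add: measure_pmf_single)
  also have "\<dots> \<le> measure_pmf.prob p A"
    using assms by (intro measure_pmf.finite_measure_mono) auto
  finally show ?thesis .
qed

theorem mainTheorem1:
  fixes N T :: nat
    and V :: "nat \<Rightarrow> nat"
    and pS :: "nat \<times> nat \<Rightarrow> real"
    and q :: "nat \<Rightarrow> (nat \<times> real) list \<Rightarrow> real"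
    and P :: "(nat \<Rightarrow> real) \<Rightarrow> ((nat \<times> nat) \<times> (nat \<times> real) list) pmf"
  defines "Str \<equiv> {(k, j). 1 \<le> k \<and> k \<le> T \<and> 1 \<le> j \<and> j \<le> V k}"
  assumes family:
    "\<And>th lam xs. th \<in> param_space N \<Longrightarrow>
       pmf (P th) (lam, xs) =
         (if lam \<in> Str \<and> set (map fst xs) \<subseteq> {1..N} \<and> consistent th xs
          then pS lam * q (fst lam) xs else 0)"
  shows "minimal_sufficient_stat (param_space N) P reduced_data"
proof -
  define Th where "Th = param_space N"
  define I where "I th xs \<longleftrightarrow> set (map fst xs) \<subseteq> {1..N} \<and> consistent th xs" for th xs
  have Idep: "I th xs = I th xs'" if "set xs = set xs'" for th xs xs'
    using that unfolding I_def consistent_def by simp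
  have fam: "pmf (P th) (lam, xs) = (if lam \<in> Str \<and> I th xs then pS lam * q (fst lam) xs else 0)"
    if "th \<in> Th" for th lam xs
    using family[of th lam xs] that unfolding Th_def I_def by simp
  define R where "R d = {x :: (nat \<times> nat) \<times> (nat \<times> real) list. reduced_data x = reduced_data d}" for d :: "(nat \<times> nat) \<times> (nat \<times> real) list"
  have eqR: "pmf (P th) x = pmf (P th') x"
    if "th \<in> Th" "th' \<in> Th" "I th (snd d)" "I th' (snd d)" "x \<in> R d" for th th' d x
  proof -
    obtain lam xs where x: "x = (lam, xs)" by (cases x)
    have "set xs = set (snd d)" using that(5) x unfolding R_def reduced_data_def by simp
    then have "I th xs" "I th' xs" using Idep that(3,4) by blast+
    then show ?thesis using fam[OF that(1)] fam[OF that(2)] x by simp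
  qed
  have zeroR: "measure_pmf.prob (P th) (R d) = 0" if "th \<in> Th" "\<not> I th (snd d)" for th d
  proof -
    have "\<forall>x\<in>R d. pmf (P th) x = 0"
    proof
      fix x assume "x \<in> R d"
      obtain lam xs where x: "x = (lam, xs)" by (cases x)
      have "set xs = set (snd d)" using \<open>x \<in> R d\<close> x unfolding R_def reduced_data_def by simp
      then have "\<not> I th xs" using Idep that(2) by blast
      then show "pmf (P th) x = 0" using fam[OF that(1)] x by simp
    qed
    then show ?thesis by (simp add: measure_pmf_conv_infsetsum cong: infsetsum_cong)
  qed
  have suff: "sufficient_stat Th P reduced_data"
  proof -
    define th0 where "th0 d = (SOME th. th \<in> Th \<and> I th (snd d))" for d :: "(nat \<times> nat) \<times> (nat \<times> real) list"
    define h where "h d = (if \<exists>th\<in>Th. I th (snd d)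
        then pmf (P (th0 d)) d / measure_pmf.prob (P (th0 d)) (R d) else 0)" for d
    show ?thesis unfolding sufficient_stat_def
    proof (intro exI ballI allI)
      fix th d assume th: "th \<in> Th"
      have Rd: "{x. reduced_data x = reduced_data d} = R d" by (simp add: R_def)
      show "pmf (P th) d = h d * measure_pmf.prob (P th) {x. reduced_data x = reduced_data d}"
      proof (cases "I th (snd d)")
        case True
        then have ex: "\<exists>th\<in>Th. I th (snd d)" using th by blast
        then have t0: "th0 d \<in> Th" "I (th0 d) (snd d)" unfolding th0_def
          by (metis (mono_tags, lifting) someI_ex)+
        have dR: "d \<in> R d" by (simp add: R_def)
        have e1: "pmf (P th) d = pmf (P (th0 d)) d" using eqR[OF th t0(1) True t0(2) dR] .
        have e2: "measure_pmf.prob (P th) (R d) = measure_pmf.prob (P (th0 d)) (R d)"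
          by (rule prob_cong_pmf) (rule eqR[OF th t0(1) True t0(2)])
        show ?thesis
        proof (cases "measure_pmf.prob (P (th0 d)) (R d) = 0")
          case True
          then have "pmf (P (th0 d)) d = 0" using pmf_le_prob[OF dR, of "P (th0 d)"] pmf_nonneg[of "P (th0 d)" d] by linarith
          then show ?thesis using e1 e2 True Rd by simp
        next
          case False
          then show ?thesis using e1 e2 Rd ex unfolding h_def by simp
        qed
      next
        case False
        have "pmf (P th) d = 0" using fam[OF th, of "fst d" "snd d"] False by simp
        then show ?thesis using zeroR[OF th False] Rd by simp
      qed
    qed
  qed
  have supp: "\<exists>th\<in>Th. fst d \<in> Str \<and> I th (snd d) \<and> pS (fst d) * q (fst (fst d)) (snd d) \<noteq> 0"
    if "d \<in> family_support Th P" for d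
  proof -
    from that obtain th where th: "th \<in> Th" "pmf (P th) d \<noteq> 0"
      unfolding family_support_def by (auto simp: set_pmf_iff)
    then show ?thesis using fam[OF th(1), of "fst d" "snd d"] by (auto split: if_splits)
  qed
  have sub: "set (snd d) \<subseteq> set (snd d')"
    if S: "sufficient_stat Th P S" and d: "d \<in> family_support Th P" and d': "d' \<in> family_support Th P"
      and eq: "S d = S d'" for S :: "_ \<Rightarrow> _ set" and d d'
  proof
    fix p assume p: "p \<in> set (snd d)"
    obtain i y where piy: "p = (i, y)" by (cases p)
    show "p \<in> set (snd d')"
    proof (rule ccontr)
      assume np: "p \<notin> set (snd d')"
      from S obtain h where h: "\<And>th d. th \<in> Th \<Longrightarrow> pmf (P th) d = h d * measure_pmf.prob (P th) {x. S x = S d}"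
        unfolding sufficient_stat_def by blast
      from supp[OF d] obtain th0 where t0: "th0 \<in> Th" "fst d \<in> Str" "I th0 (snd d)"
        "pS (fst d) * q (fst (fst d)) (snd d) \<noteq> 0" by blast
      from supp[OF d'] obtain th1 where t1: "th1 \<in> Th" "fst d' \<in> Str" "I th1 (snd d')"
        "pS (fst d') * q (fst (fst d')) (snd d') \<noteq> 0" by blast
      have "pmf (P th0) d \<noteq> 0" using fam[OF t0(1), of "fst d" "snd d"] t0 by simp
      then have hd: "h d \<noteq> 0" using h[OF t0(1), of d] by auto
      have iN: "i \<in> {1..N}" using t0(3) p piy unfolding I_def by force
      define th2 where "th2 = (if th1 i = y then th1(i := y + 1) else th1)"
      have th2: "th2 \<in> Th" using t1(1) iN unfolding th2_def Th_def param_space_def by auto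
      have th2i: "th2 i \<noteq> y" unfolding th2_def by simp
      have "I th2 (snd d')"
      proof -
        have "\<forall>(j, z)\<in>set (snd d'). th2 j = z"
        proof (intro ballI, clarify)
          fix j z assume jz: "(j, z) \<in> set (snd d')"
          then have "th1 j = z" using t1(3) unfolding I_def consistent_def by auto
          moreover have "th1 i = y \<longrightarrow> j \<noteq> i" using jz np piy \<open>th1 j = z\<close> by auto
          ultimately show "th2 j = z" unfolding th2_def by auto
        qed
        then show ?thesis using t1(3) unfolding I_def consistent_def by simp
      qed
      then have "pmf (P th2) d' \<noteq> 0" using fam[OF th2, of "fst d'" "snd d'"] t1 by simp
      then have pos: "measure_pmf.prob (P th2) {x. S x = S d} \<noteq> 0" using h[OF th2, of d'] eq by auto
      have "\<not> I th2 (snd d)" using th2i p piy unfolding I_def consistent_def by fastforce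
      then have "pmf (P th2) d = 0" using fam[OF th2, of "fst d" "snd d"] by simp
      then show False using h[OF th2, of d] hd pos by simp
    qed
  qed
  show ?thesis
    unfolding minimal_sufficient_stat_def Th_def[symmetric]
  proof (intro conjI suff allI impI ballI)
    fix S :: "_ \<Rightarrow> _ set" and d d'
    assume "sufficient_stat Th P S" "d \<in> family_support Th P" "d' \<in> family_support Th P" "S d = S d'"
    then show "reduced_data d = reduced_data d'"
      unfolding reduced_data_def using sub[of S d d'] sub[of S d' d] by auto
  qed
qed

end
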